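(* For every $n\ge1$, the affine curvatures of the inflection-point polygon $r_1,\dots,r_{N(n)}$ of the Hilbert curve $H_n$ satisfy, for all $2\le k\le N(n)-2$, $$\kappa_k\in\{1,-1,2,-2,\tfrac12,-\tfrac12,3,\tfrac13\},\qquad \bar\kappa_k=0.$$
   Context: The Hilbert curve at step $n$ is the polygon $H_n$ in the unit square defined recursively: $H_1$ has vertices $(\tfrac14,\tfrac14),(\tfrac14,\tfrac34),(\tfrac34,\tfrac34),(\tfrac34,\tfrac14)$; $H_{n+1}$ is the concatenation (in this order, joined by the connecting edges) of $f_1(H_n),f_2(H_n),f_3(H_n),f_4(H_n)$, where $f_1(x,y)=(\tfrac y2,\tfrac x2)$, $f_2(x,y)=(\tfrac x2,\tfrac y2+\tfrac12)$, $f_3(x,y)=(\tfrac x2+\tfrac12,\tfrac y2+\tfrac12)$, $f_4(x,y)=(1-\tfrac y2,\tfrac12-\tfrac x2)$, each copy traversed in the order inherited from $H_n$. The inflection points $r_1,\dots,r_{N(n)}$ of $H_n$ are the vertices of $H_n$, in order, after deleting every interior vertex whose two neighbouring vertices are collinear with it (endpoints kept). Affine curvatures: $t_k=r_{k+1}-r_k$, $[a,b]=a_1b_2-a_2b_1$, and for $2\le k\le N-2$ with $[t_{k-1},t_k]\ne0$, $\kappa_k=\dfrac{[t_k,t_{k+1}]}{[t_{k-1},t_k]}$, $\bar\kappa_k=\dfrac{[t_{k-1},t_{k+1}]}{[t_{k-1},t_k]}$. *)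

theory Defs
  imports Complex_Main
begin

type_synonym pt = "real \<times> real"

definition f1 :: "pt \<Rightarrow> pt" where "f1 p = (snd p / 2, fst p / 2)"
definition f2 :: "pt \<Rightarrow> pt" where "f2 p = (fst p / 2, snd p / 2 + 1/2)"
definition f3 :: "pt \<Rightarrow> pt" where "f3 p = (fst p / 2 + 1/2, snd p / 2 + 1/2)"
definition f4 :: "pt \<Rightarrow> pt" where "f4 p = (1 - snd p / 2, 1/2 - fst p / 2)"

definition H1 :: "pt list" where
  "H1 = [(1/4, 1/4), (1/4, 3/4), (3/4, 3/4), (3/4, 1/4)]"

definition hstep :: "pt list \<Rightarrow> pt list" where
  "hstep vs = map f1 vs @ map f2 vs @ map f3 vs @ map f4 vs"

text \<open>Vertex list of the Hilbert polygon H_n (meaningful for n >= 1).\<close>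
definition hilbert :: "nat \<Rightarrow> pt list" where
  "hilbert n = (hstep ^^ (n - 1)) H1"

definition psub :: "pt \<Rightarrow> pt \<Rightarrow> pt" where
  "psub a b = (fst a - fst b, snd a - snd b)"

definition cross :: "pt \<Rightarrow> pt \<Rightarrow> real" where
  "cross a b = fst a * snd b - snd a * fst b"

definition collinear3 :: "pt \<Rightarrow> pt \<Rightarrow> pt \<Rightarrow> bool" where
  "collinear3 a b c \<longleftrightarrow> cross (psub b a) (psub c a) = 0"

definition inflection_pts :: "pt list \<Rightarrow> pt list" where
  "inflection_pts vs = [vs ! i. i \<leftarrow> [0..<length vs],
      i = 0 \<or> i = length vs - 1 \<or> \<not> collinear3 (vs ! (i - 1)) (vs ! i) (vs ! (i + 1))]"

definition Ninf :: "nat \<Rightarrow> nat" where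
  "Ninf n = length (inflection_pts (hilbert n))"

definition rpt :: "nat \<Rightarrow> nat \<Rightarrow> pt" where
  "rpt n k = inflection_pts (hilbert n) ! (k - 1)"

definition tvec :: "nat \<Rightarrow> nat \<Rightarrow> pt" where
  "tvec n k = psub (rpt n (k + 1)) (rpt n k)"

definition kappa :: "nat \<Rightarrow> nat \<Rightarrow> real" where
  "kappa n k = cross (tvec n k) (tvec n (k + 1)) / cross (tvec n (k - 1)) (tvec n k)"

definition kappa_bar :: "nat \<Rightarrow> nat \<Rightarrow> real" where
  "kappa_bar n k = cross (tvec n (k - 1)) (tvec n (k + 1)) / cross (tvec n (k - 1)) (tvec n k)"

end

theory Submission
  imports Defs
begin


fun g :: "pt list \<Rightarrow> pt list" where
  "g (a#b#c#r) = (if collinear3 a b c then [] else [b]) @ g (b#c#r)"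
| "g _ = []"

lemma interior:
  "[vs ! i. i \<leftarrow> [Suc 0..<length vs - 1], \<not> collinear3 (vs!(i-1)) (vs!i) (vs!(i+1))] = g vs"
proof (induction vs rule: g.induct)
  case (1 a b c r)
  have e: "[Suc 0..<length (a#b#c#r) - 1] = Suc 0 # map Suc [Suc 0..<length (b#c#r) - 1]"
    by (cases r) (auto simp: map_Suc_upt upt_conv_Cons Suc_le_eq, metis Suc_lessI length_greater_0_conv)
  have "[(a#b#c#r) ! i. i \<leftarrow> map Suc [Suc 0..<length (b#c#r) - 1],
        \<not> collinear3 ((a#b#c#r)!(i-1)) ((a#b#c#r)!i) ((a#b#c#r)!(i+1))]
      = [(b#c#r) ! i. i \<leftarrow> [Suc 0..<length (b#c#r) - 1],
        \<not> collinear3 ((b#c#r)!(i-1)) ((b#c#r)!i) ((b#c#r)!(i+1))]"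
    unfolding map_map
  proof (rule arg_cong[where f=concat], rule map_cong[OF refl])
    fix i assume "i \<in> set [Suc 0..<length (b#c#r) - 1]"
    then have "i \<noteq> 0" by (auto split: if_splits)
    then obtain j where j: "i = Suc j" using not0_implies_Suc by blast
    show "((\<lambda>i. if \<not> collinear3 ((a#b#c#r)!(i-1)) ((a#b#c#r)!i) ((a#b#c#r)!(i+1))
             then [(a#b#c#r)!i] else []) \<circ> Suc) i =
          (if \<not> collinear3 ((b#c#r)!(i-1)) ((b#c#r)!i) ((b#c#r)!(i+1)) then [(b#c#r)!i] else [])"
      unfolding j by simp
  qed
  then show ?case using 1 e by simp
qed auto

lemma infl_g: "length vs \<ge> 2 \<Longrightarrow> inflection_pts vs = hd vs # g vs @ [last vs]"
proof -
  assume a: "length vs \<ge> 2"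
  have u: "[0..<length vs] = 0 # [Suc 0..<length vs - 1] @ [length vs - 1]"
    using a by (metis One_nat_def Suc_le_eq le_add_diff_inverse2 less_imp_le_nat nat_le_linear
      not_less_eq_eq numeral_2_eq_2 upt_Suc_append upt_conv_Cons zero_less_Suc diff_Suc_1 add.commute)
  have m: "[vs ! i. i \<leftarrow> [Suc 0..<length vs - 1], i = 0 \<or> i = length vs - 1 \<or>
       \<not> collinear3 (vs!(i-1)) (vs!i) (vs!(i+1))] =
     [vs ! i. i \<leftarrow> [Suc 0..<length vs - 1], \<not> collinear3 (vs!(i-1)) (vs!i) (vs!(i+1))]"
    by (auto intro!: arg_cong[where f=concat] map_cong)
  show ?thesis unfolding inflection_pts_def u
    using m interior[of vs] a by (simp add: hd_conv_nth[symmetric] last_conv_nth[symmetric] del: One_nat_def) (metis One_nat_def Suc_1 hd_conv_nth last_conv_nth list.size(3) not_numeral_le_zero)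
qed


definition good :: "(pt \<Rightarrow> pt) \<Rightarrow> bool" where
  "good f \<longleftrightarrow> (\<exists>dt. dt \<noteq> 0 \<and> (\<forall>a b c d. cross (psub (f a) (f b)) (psub (f c) (f d)) = dt * cross (psub a b) (psub c d)))"

lemma good_E: assumes "good f"
  obtains dt where "dt \<noteq> 0" "\<And>a b c d. cross (psub (f a) (f b)) (psub (f c) (f d)) = dt * cross (psub a b) (psub c d)"
  using assms unfolding good_def by blast

lemma good_col: "good f \<Longrightarrow> collinear3 (f a) (f b) (f c) \<longleftrightarrow> collinear3 a b c"
  by (erule good_E) (simp add: collinear3_def)

definition Q4 :: "pt \<Rightarrow> pt \<Rightarrow> pt \<Rightarrow> pt \<Rightarrow> bool" where
  "Q4 a b c d \<longleftrightarrow> cross (psub b a) (psub c b) \<noteq> 0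
     \<and> cross (psub c b) (psub d c) / cross (psub b a) (psub c b) \<in> {1, -1, 2, -2, 1/2, -1/2, 3, 1/3}
     \<and> cross (psub b a) (psub d c) / cross (psub b a) (psub c b) = 0"

lemma good_Q4: "good f \<Longrightarrow> Q4 (f a) (f b) (f c) (f d) \<longleftrightarrow> Q4 a b c d"
  by (erule good_E) (simp add: Q4_def)

fun W :: "pt list \<Rightarrow> bool" where
  "W (a#b#c#d#r) = (Q4 a b c d \<and> W (b#c#d#r))"
| "W _ = True"

lemma W_appL: "W (xs @ ys) \<Longrightarrow> W xs"
  by (induction xs rule: W.induct) auto

lemma W_tl: "W (x # zs) \<Longrightarrow> W zs"
  by (cases zs rule: W.cases) auto

lemma W_appR: "W (xs @ ys) \<Longrightarrow> W ys"
  by (induction xs) (auto dest: W_tl)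

lemma W_map: "good f \<Longrightarrow> W xs \<Longrightarrow> W (map f xs)"
  by (induction xs rule: W.induct) (auto simp: good_Q4)

lemma W_join: "length L = 3 \<Longrightarrow> W (X @ L) \<Longrightarrow> W (L @ R) \<Longrightarrow> W (X @ L @ R)"
proof (induction X)
  case Nil then show ?case by simp
next
  case (Cons x X)
  have "length (X @ L) \<ge> 3" using Cons by simp
  then obtain b c d r where e: "X @ L = b # c # d # r"
    by (metis One_nat_def Suc_le_length_iff numeral_3_eq_3)
  have "W (X @ L @ R)" using Cons W_tl by auto
  with Cons e show ?case by (metis W.simps(1) append_Cons append_assoc)
qed

lemma W_join2: "length L = 3 \<Longrightarrow> length F = 3 \<Longrightarrow> W (X @ L) \<Longrightarrow> W (F @ Y) \<Longrightarrow> W (L @ J @ F)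
   \<Longrightarrow> W (X @ L @ J @ F @ Y)"
  using W_join[of F "L @ J" Y] W_join[of L X "J @ F @ Y"] by simp

lemma W_nth: "W xs \<Longrightarrow> i + 3 < length xs \<Longrightarrow> Q4 (xs!i) (xs!(i+1)) (xs!(i+2)) (xs!(i+3))"
proof (induction xs arbitrary: i rule: W.induct)
  case (1 a b c d r)
  then show ?case by (cases i) (auto simp: nth_Cons')
qed auto

definition jn :: "pt \<Rightarrow> pt \<Rightarrow> pt \<Rightarrow> pt \<Rightarrow> pt list" where
  "jn a b x y = (if collinear3 a b x then [] else [b]) @ (if collinear3 b x y then [] else [x])"

lemma g_cons2: "xs \<noteq> [] \<Longrightarrow> g (c#d#xs) = (if collinear3 c d (hd xs) then [] else [d]) @ g (d#xs)"
  by (cases xs) auto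

lemma g_app: "g (A @ a # b # x # y # B) = g (A @ [a,b]) @ jn a b x y @ g (x#y#B)"
proof (induction A arbitrary: a b)
  case Nil then show ?case by (simp add: jn_def)
next
  case (Cons c A)
  show ?case
  proof (cases A)
    case Nil
    then show ?thesis using Cons.IH[of a b] by simp
  next
    case (Cons d A3)
    then show ?thesis using Cons.IH[of a b] by (cases A3) (simp_all add: g_cons2)
  qed
qed

lemma g_map: "good f \<Longrightarrow> g (map f vs) = map f (g vs)"
  by (induction vs rule: g.induct) (auto simp: good_col)

lemma jn_map: "good f \<Longrightarrow> jn (f a) (f b) (f x) (f y) = map f (jn a b x y)"
  by (simp add: jn_def good_col)

definition sc :: "pt \<Rightarrow> real \<Rightarrow> pt \<Rightarrow> pt" where
  "sc c h p = (fst c + h * fst p, snd c + h * snd p)"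

lemma good_sc: "h \<noteq> 0 \<Longrightarrow> good (sc c h)"
  unfolding good_def sc_def cross_def psub_def
  by (rule exI[of _ "h*h"]) (auto simp: algebra_simps)

lemma good_f1: "good f1" unfolding good_def f1_def cross_def psub_def
  by (rule exI[of _ "-1/4"]) (auto simp: algebra_simps)
lemma good_f2: "good f2" unfolding good_def f2_def cross_def psub_def
  by (rule exI[of _ "1/4"]) (auto simp: algebra_simps)
lemma good_f3: "good f3" unfolding good_def f3_def cross_def psub_def
  by (rule exI[of _ "1/4"]) (auto simp: algebra_simps)
lemma good_f4: "good f4" unfolding good_def f4_def cross_def psub_def
  by (rule exI[of _ "-1/4"]) (auto simp: algebra_simps)

definition swp :: "pt \<Rightarrow> pt" where "swp p = (snd p, fst p)"
definition rf :: "pt \<Rightarrow> pt" where "rf p = (- snd p, - fst p)"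

lemma f1_z: "f1 (sc (0,0) h p) = sc (0,0) (h/2) (swp p)" by (simp add: f1_def sc_def swp_def)
lemma f1_e: "f1 (sc (1,0) h p) = sc (0,1/2) (h/2) (swp p)" by (simp add: f1_def sc_def swp_def)
lemma f2_z: "f2 (sc (0,0) h p) = sc (0,1/2) (h/2) p" by (simp add: f2_def sc_def)
lemma f2_e: "f2 (sc (1,0) h p) = sc (1/2,1/2) (h/2) p" by (simp add: f2_def sc_def)
lemma f3_z: "f3 (sc (0,0) h p) = sc (1/2,1/2) (h/2) p" by (simp add: f3_def sc_def field_simps)
lemma f3_e: "f3 (sc (1,0) h p) = sc (1,1/2) (h/2) p" by (simp add: f3_def sc_def field_simps)
lemma f4_z: "f4 (sc (0,0) h p) = sc (1,1/2) (h/2) (rf p)" by (simp add: f4_def sc_def rf_def field_simps)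
lemma f4_e: "f4 (sc (1,0) h p) = sc (1,0) (h/2) (rf p)" by (simp add: f4_def sc_def rf_def field_simps)



lemma g_app': "length A \<ge> 2 \<Longrightarrow> length B \<ge> 2 \<Longrightarrow>
   g (A @ B) = g A @ jn (A ! (length A - 2)) (last A) (hd B) (B ! 1) @ g B"
proof -
  assume a: "length A \<ge> 2" and b: "length B \<ge> 2"
  obtain q p A1 where "rev A = q # p # A1"
    using a by (metis Suc_le_length_iff numeral_2_eq_2 length_rev)
  then have A: "A = rev A1 @ [p, q]" by (metis append.assoc append_Cons append_Nil rev.simps(2) rev_rev_ident)
  define A0 where "A0 = rev A1"
  have A: "A = A0 @ [p, q]" using A A0_def by simp
  obtain x y B0 where B: "B = x # y # B0"
    using b by (metis Suc_le_length_iff numeral_2_eq_2)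
  show ?thesis using g_app[of A0 p q x y B0] unfolding A B
    by (simp add: nth_append)
qed

definition Inv :: "pt list \<Rightarrow> real \<Rightarrow> pt list \<Rightarrow> pt list \<Rightarrow> pt list \<Rightarrow> pt list \<Rightarrow> bool" where
  "Inv H h V Wl A B \<longleftrightarrow> h > 0 \<and> length V = 2 \<and> length Wl = 2 \<and> length A = 3 \<and> length B = 3
     \<and> (\<exists>M. H = map (sc (0,0) h) V @ M @ map (sc (1,0) h) Wl)
     \<and> (\<exists>MG. g H = map (sc (0,0) h) A @ MG @ map (sc (1,0) h) B)
     \<and> W (sc (0,0) h (hd V) # g H @ [sc (1,0) h (last Wl)])"

lemma step:
  assumes I: "Inv H h [v1,v2] [w1,w2] [a1,a2,a3] [b1,b2,b3]"
   and J1: "W ([swp b1, swp b2, swp b3] @ jn (swp w1) (swp w2) v1 v2 @ [a1,a2,a3])"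
   and J2: "W ([b1,b2,b3] @ jn w1 w2 v1 v2 @ [a1,a2,a3])"
   and J3: "W ([b1,b2,b3] @ jn w1 w2 (rf v1) (rf v2) @ [rf a1, rf a2, rf a3])"
  shows "Inv (hstep H) (h/2) (map swp [v1,v2]) (map rf [w1,w2]) (map swp [a1,a2,a3]) (map rf [b1,b2,b3])"
proof -
  from I have hp: "h > 0" unfolding Inv_def by simp
  from I obtain M where HM: "H = map (sc (0,0) h) [v1,v2] @ M @ map (sc (1,0) h) [w1,w2]"
    unfolding Inv_def by blast
  from I obtain MG where GM: "g H = map (sc (0,0) h) [a1,a2,a3] @ MG @ map (sc (1,0) h) [b1,b2,b3]"
    unfolding Inv_def by blast
  from I have WH: "W (sc (0,0) h v1 # g H @ [sc (1,0) h w2])" unfolding Inv_def by simp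
  define p0 where "p0 = sc (0,0) h v1"
  define pe where "pe = sc (1,0) h w2"
  define Gz where "Gz = map (sc (0,0) h) [a1,a2,a3]"
  define Ge where "Ge = map (sc (1,0) h) [b1,b2,b3]"
  define G where "G = g H"
  have G: "G = Gz @ MG @ Ge" using GM by (simp add: G_def Gz_def Ge_def)
  have lenH: "length H \<ge> 2" using HM by simp
  have h2: "h/2 \<noteq> 0" using hp by simp
  have gs: "good (sc c (h/2))" for c using good_sc[OF h2] .
  define J1' where "J1' = jn (f1 (sc (1,0) h w1)) (f1 (sc (1,0) h w2)) (f2 (sc (0,0) h v1)) (f2 (sc (0,0) h v2))"
  define J2' where "J2' = jn (f2 (sc (1,0) h w1)) (f2 (sc (1,0) h w2)) (f3 (sc (0,0) h v1)) (f3 (sc (0,0) h v2))"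
  define J3' where "J3' = jn (f3 (sc (1,0) h w1)) (f3 (sc (1,0) h w2)) (f4 (sc (0,0) h v1)) (f4 (sc (0,0) h v2))"
  have J1e: "J1' = map (sc (0,1/2) (h/2)) (jn (swp w1) (swp w2) v1 v2)"
    unfolding J1'_def f1_e f2_z jn_map[OF gs] ..
  have J2e: "J2' = map (sc (1/2,1/2) (h/2)) (jn w1 w2 v1 v2)"
    unfolding J2'_def f2_e f3_z jn_map[OF gs] ..
  have J3e: "J3' = map (sc (1,1/2) (h/2)) (jn w1 w2 (rf v1) (rf v2))"
    unfolding J3'_def f3_e f4_z jn_map[OF gs] ..
  have gH: "g (hstep H) = map f1 G @ J1' @ map f2 G @ J2' @ map f3 G @ J3' @ map f4 G"
  proof -
    have "g (map f3 H @ map f4 H) = map f3 G @ J3' @ map f4 G"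
      using lenH by (subst g_app') (simp_all add: G_def g_map good_f3 good_f4 J3'_def, simp add: HM nth_append)
    moreover have "g (map f2 H @ map f3 H @ map f4 H) = map f2 G @ J2' @ g (map f3 H @ map f4 H)"
      using lenH by (subst g_app') (simp_all add: G_def g_map good_f2 J2'_def, simp add: HM nth_append)
    moreover have "g (map f1 H @ map f2 H @ map f3 H @ map f4 H) = map f1 G @ J1' @ g (map f2 H @ map f3 H @ map f4 H)"
      using lenH by (subst g_app') (simp_all add: G_def g_map good_f1 J1'_def, simp add: HM nth_append)
    ultimately show ?thesis unfolding hstep_def by simp
  qed
  have c1: "\<exists>M. hstep H = map (sc (0,0) (h/2)) (map swp [v1,v2]) @ M @ map (sc (1,0) (h/2)) (map rf [w1,w2])"
    by (rule exI[of _ "map f1 M @ map f1 (map (sc (1,0) h) [w1,w2]) @ map f2 H @ map f3 H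
         @ map f4 (map (sc (0,0) h) [v1,v2]) @ map f4 M"])
       (simp add: hstep_def HM f1_z f4_e)
  have c2: "\<exists>MG. g (hstep H) = map (sc (0,0) (h/2)) (map swp [a1,a2,a3]) @ MG @ map (sc (1,0) (h/2)) (map rf [b1,b2,b3])"
    by (rule exI[of _ "map f1 MG @ map f1 Ge @ J1' @ map f2 G @ J2' @ map f3 G @ J3' @ map f4 Gz @ map f4 MG"])
       (simp add: gH G Gz_def Ge_def f1_z f4_e)
  have WG: "W (p0 # G @ [pe])" using WH by (simp add: p0_def pe_def G_def)
  have WG1: "W (p0 # G)" using W_appL[of "p0 # G" "[pe]"] WG by simp
  have WG2: "W G" using W_tl WG1 by blast
  have WG3: "W (G @ [pe])" using W_tl WG by simp
  have lg: "length Ge = 3" "length Gz = 3" by (simp_all add: Ge_def Gz_def)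
  have P3: "W (map f3 G @ J3' @ map f4 (G @ [pe]))"
  proof -
    have "W (map f3 (Gz @ MG) @ map f3 Ge @ J3' @ map f4 Gz @ map f4 (MG @ Ge @ [pe]))"
    proof (rule W_join2)
      show "W (map f3 (Gz @ MG) @ map f3 Ge)" using W_map[OF good_f3 WG2] by (simp add: G)
      show "W (map f4 Gz @ map f4 (MG @ Ge @ [pe]))" using W_map[OF good_f4 WG3] by (simp add: G)
      show "W (map f3 Ge @ J3' @ map f4 Gz)"
        using W_map[OF gs J3, of "(1,1/2)"] by (simp add: J3e Ge_def Gz_def f3_e f4_z)
    qed (simp_all add: lg)
    then show ?thesis by (simp add: G)
  qed
  have P2: "W (map f2 G @ J2' @ map f3 G @ J3' @ map f4 (G @ [pe]))"
  proof -
    have "W (map f2 (Gz @ MG) @ map f2 Ge @ J2' @ map f3 Gz @ (map f3 (MG @ Ge) @ J3' @ map f4 (G @ [pe])))"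
    proof (rule W_join2)
      show "W (map f2 (Gz @ MG) @ map f2 Ge)" using W_map[OF good_f2 WG2] by (simp add: G)
      show "W (map f3 Gz @ (map f3 (MG @ Ge) @ J3' @ map f4 (G @ [pe])))" using P3 by (simp add: G)
      show "W (map f2 Ge @ J2' @ map f3 Gz)"
        using W_map[OF gs J2, of "(1/2,1/2)"] by (simp add: J2e Ge_def Gz_def f2_e f3_z)
    qed (simp_all add: lg)
    then show ?thesis by (simp add: G)
  qed
  have P1: "W (map f1 (p0 # G) @ J1' @ map f2 G @ J2' @ map f3 G @ J3' @ map f4 (G @ [pe]))"
  proof -
    have "W (map f1 (p0 # Gz @ MG) @ map f1 Ge @ J1' @ map f2 Gz @ (map f2 (MG @ Ge) @ J2' @ map f3 G @ J3' @ map f4 (G @ [pe])))"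
    proof (rule W_join2)
      show "W (map f1 (p0 # Gz @ MG) @ map f1 Ge)" using W_map[OF good_f1 WG1] by (simp add: G)
      show "W (map f2 Gz @ (map f2 (MG @ Ge) @ J2' @ map f3 G @ J3' @ map f4 (G @ [pe])))" using P2 by (simp add: G)
      show "W (map f1 Ge @ J1' @ map f2 Gz)"
        using W_map[OF gs J1, of "(0,1/2)"] by (simp add: J1e Ge_def Gz_def f1_e f2_z)
    qed (simp_all add: lg)
    then show ?thesis by (simp add: G)
  qed
  have c3: "W (sc (0,0) (h/2) (hd (map swp [v1,v2])) # g (hstep H) @ [sc (1,0) (h/2) (last (map rf [w1,w2]))])"
    using P1 by (simp add: gH p0_def pe_def f1_z f4_e)
  show ?thesis unfolding Inv_def using hp c1 c2 c3 by simp
qed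



definition DV :: "bool \<Rightarrow> pt list" where
  "DV b = (if b then [(1/2,1/2),(3/2,1/2)] else [(1/2,1/2),(1/2,3/2)])"
definition DW :: "bool \<Rightarrow> pt list" where
  "DW b = (if b then [(-3/2,1/2),(-1/2,1/2)] else [(-1/2,3/2),(-1/2,1/2)])"
definition DA :: "bool \<Rightarrow> pt list" where
  "DA b = (if b then [(3/2,1/2),(3/2,3/2),(1/2,3/2)] else [(1/2,3/2),(3/2,3/2),(3/2,1/2)])"
definition DB :: "bool \<Rightarrow> pt list" where
  "DB b = (if b then [(-1/2,3/2),(-3/2,3/2),(-3/2,1/2)] else [(-3/2,1/2),(-3/2,3/2),(-1/2,3/2)])"

lemmas cd = jn_def collinear3_def cross_def psub_def swp_def rf_def Q4_def

lemma hil2: "hilbert 2 = [(1/8, 1/8), (3/8, 1/8), (3/8, 3/8), (1/8, 3/8), (1/8, 5/8), (1/8, 7/8), (3/8, 7/8), (3/8, 5/8), (5/8, 5/8), (5/8, 7/8), (7/8, 7/8), (7/8, 5/8), (7/8, 3/8), (5/8, 3/8), (5/8, 1/8), (7/8, 1/8)]"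
  by (simp add: hilbert_def hstep_def H1_def f1_def f2_def f3_def f4_def)

lemma g2: "g (hilbert 2) = [(3/8, 1/8), (3/8, 3/8), (1/8, 3/8), (1/8, 7/8), (3/8, 7/8), (3/8, 5/8), (5/8, 5/8), (5/8, 7/8), (7/8, 7/8), (7/8, 3/8), (5/8, 3/8), (5/8, 1/8)]"
  unfolding hil2 by (simp add: collinear3_def cross_def psub_def)

lemma inv2: "Inv (hilbert 2) ((1/2)^2) (DV True) (DW True) (DA True) (DB True)"
proof -
  have a: "\<exists>M. hilbert 2 = map (sc (0,0) ((1/2)^2)) (DV True) @ M @ map (sc (1,0) ((1/2)^2)) (DW True)"
    by (rule exI[of _ "[(3/8, 3/8), (1/8, 3/8), (1/8, 5/8), (1/8, 7/8), (3/8, 7/8), (3/8, 5/8), (5/8, 5/8), (5/8, 7/8), (7/8, 7/8), (7/8, 5/8), (7/8, 3/8), (5/8, 3/8)]"])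
       (simp add: hil2 sc_def DV_def DW_def power2_eq_square)
  have b: "\<exists>MG. g (hilbert 2) = map (sc (0,0) ((1/2)^2)) (DA True) @ MG @ map (sc (1,0) ((1/2)^2)) (DB True)"
    by (rule exI[of _ "[(1/8, 7/8), (3/8, 7/8), (3/8, 5/8), (5/8, 5/8), (5/8, 7/8), (7/8, 7/8)]"])
       (simp add: g2 sc_def DA_def DB_def power2_eq_square)
  have c: "W (sc (0,0) ((1/2)^2) (hd (DV True)) # g (hilbert 2) @ [sc (1,0) ((1/2)^2) (last (DW True))])"
    by (simp add: g2 sc_def DV_def DW_def power2_eq_square Q4_def cross_def psub_def)
  show ?thesis unfolding Inv_def using a b c by (simp add: DV_def DW_def DA_def DB_def)
qed

lemma hil_Suc: "n \<ge> 1 \<Longrightarrow> hilbert (Suc n) = hstep (hilbert n)"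
  unfolding hilbert_def by (cases n) auto

lemma inv_all: "n \<ge> 2 \<Longrightarrow> Inv (hilbert n) ((1/2)^n) (DV (even n)) (DW (even n)) (DA (even n)) (DB (even n))"
proof (induction n rule: nat_induct_at_least)
  case base then show ?case using inv2 by simp
next
  case (Suc n)
  have hs: "hilbert (Suc n) = hstep (hilbert n)" using Suc by (simp add: hil_Suc)
  have e: "(1/2::real)^(Suc n) = (1/2)^n / 2" by simp
  show ?case
  proof (cases "even n")
    case True
    have "Inv (hilbert n) ((1/2)^n) [(1/2,1/2),(3/2,1/2)] [(-3/2,1/2),(-1/2,1/2)]
         [(3/2,1/2),(3/2,3/2),(1/2,3/2)] [(-1/2,3/2),(-3/2,3/2),(-3/2,1/2)]"
      using Suc.IH True by (simp add: DV_def DW_def DA_def DB_def)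
    from step[OF this] have "Inv (hstep (hilbert n)) ((1/2)^n/2) (map swp [(1/2,1/2),(3/2,1/2)]) (map rf [(-3/2,1/2),(-1/2,1/2)])
       (map swp [(3/2,1/2),(3/2,3/2),(1/2,3/2)]) (map rf [(-1/2,3/2),(-3/2,3/2),(-3/2,1/2)])"
      by (simp add: cd)
    then show ?thesis using True hs e by (simp add: DV_def DW_def DA_def DB_def swp_def rf_def)
  next
    case False
    have "Inv (hilbert n) ((1/2)^n) [(1/2,1/2),(1/2,3/2)] [(-1/2,3/2),(-1/2,1/2)]
         [(1/2,3/2),(3/2,3/2),(3/2,1/2)] [(-3/2,1/2),(-3/2,3/2),(-1/2,3/2)]"
      using Suc.IH False by (simp add: DV_def DW_def DA_def DB_def)
    from step[OF this] have "Inv (hstep (hilbert n)) ((1/2)^n/2) (map swp [(1/2,1/2),(1/2,3/2)]) (map rf [(-1/2,3/2),(-1/2,1/2)])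
       (map swp [(1/2,3/2),(3/2,3/2),(3/2,1/2)]) (map rf [(-3/2,1/2),(-3/2,3/2),(-1/2,3/2)])"
      by (simp add: cd)
    then show ?thesis using False hs e by (simp add: DV_def DW_def DA_def DB_def swp_def rf_def)
  qed
qed

lemma W_all: "n \<ge> 1 \<Longrightarrow> W (inflection_pts (hilbert n))"
proof (cases "n = 1")
  case True
  then show ?thesis
    by (simp add: infl_g hilbert_def H1_def collinear3_def cross_def psub_def Q4_def)
next
  case False
  assume "n \<ge> 1"
  with False have n2: "n \<ge> 2" by simp
  from inv_all[OF n2] obtain M h V Wl A B where I: "Inv (hilbert n) h V Wl A B" by blast
  then obtain M where HM: "hilbert n = map (sc (0,0) h) V @ M @ map (sc (1,0) h) Wl"
    and L: "length V = 2" "length Wl = 2"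
    and WW: "W (sc (0,0) h (hd V) # g (hilbert n) @ [sc (1,0) h (last Wl)])"
    unfolding Inv_def by blast
  have len: "length (hilbert n) \<ge> 2" using HM L by simp
  have "hd (hilbert n) = sc (0,0) h (hd V)" using HM L by (cases V) auto
  moreover have "last (hilbert n) = sc (1,0) h (last Wl)" using HM L
    by (cases Wl rule: rev_cases) auto
  ultimately show ?thesis using WW infl_g[OF len] by simp
qed

theorem mainTheorem11:
  fixes n k :: nat
  assumes "1 \<le> n" and "2 \<le> k" and "k \<le> Ninf n - 2"
  shows "cross (tvec n (k - 1)) (tvec n k) \<noteq> 0
         \<and> kappa n k \<in> {1, -1, 2, -2, 1/2, -1/2, 3, 1/3}
         \<and> kappa_bar n k = 0"
proof -
  define IL where "IL = inflection_pts (hilbert n)"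
  have WI: "W IL" using W_all assms(1) IL_def by simp
  obtain j where kj: "k = j + 2" using assms(2) by (metis le_add_diff_inverse2)
  have lt: "j + 3 < length IL" using assms unfolding Ninf_def IL_def kj by linarith
  have Q: "Q4 (IL!j) (IL!(j+1)) (IL!(j+2)) (IL!(j+3))" using W_nth[OF WI lt] .
  have r: "rpt n m = IL!(m - 1)" for m unfolding rpt_def IL_def ..
  have t1: "tvec n (k-1) = psub (IL!(j+1)) (IL!j)" unfolding tvec_def r kj by (simp add: numeral_3_eq_3)
  have t2: "tvec n k = psub (IL!(j+2)) (IL!(j+1))" unfolding tvec_def r kj by (simp add: numeral_3_eq_3)
  have t3: "tvec n (k+1) = psub (IL!(j+3)) (IL!(j+2))" unfolding tvec_def r kj by (simp add: numeral_3_eq_3)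
  show ?thesis using Q unfolding kappa_def kappa_bar_def t1 t2 t3 Q4_def by blast
qed

end
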